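(* Let $0<\mu<L_{\max}^{-1}$ with $L_{\max}=\max_i\|A_i\|_2^2$, and let $\{x^n\}$ be generated by GAITA (as in the context) from an arbitrary $x^0\in\mathbf{R}^N$. Then $\{x^n\}$ is bounded, for every $n\in\mathbf{N}$ $$\sum_{k=0}^n\|x^{k+1}-x^k\|_2^2\leq\frac{2\mu}{1-\mu L_{\max}}T_\lambda(x^0),$$ and $\|x^n-x^{n+1}\|_2\to0$ as $n\to\infty$.
   Context: Let $A\in\mathbf{R}^{m\times N}$ have columns $A_1,\dots,A_N$, $y\in\mathbf{R}^m$, $\lambda>0$, $q\in(0,1)$, and $T_\lambda(x)=\frac12\|Ax-y\|_2^2+\lambda\sum_{i=1}^N|x_i|^q$. For a step size $\mu>0$ set $\tau_{\mu,q}=\frac{2-q}{2-2q}(2\lambda\mu(1-q))^{\frac{1}{2-q}}$ and $\eta_{\mu,q}=(2\lambda\mu(1-q))^{\frac{1}{2-q}}$. For $z\in\mathbf{R}$ let $prox_{\mu,\lambda|\cdot|^q}(z)=\arg\min_{v\in\mathbf{R}}\{\frac{(z-v)^2}{2\mu}+\lambda|v|^q\}$ (a single point when $|z|\neq\tau_{\mu,q}$). Define $\mathcal{T}(z,w)$ as the unique element of $prox_{\mu,\lambda|\cdot|^q}(z)$ if $|z|\neq\tau_{\mu,q}$, and, if $|z|=\tau_{\mu,q}$, as $sgn(z)\eta_{\mu,q}$ when $w\neq0$ and $0$ when $w=0$ ($sgn(0)=0$). GAITA: given $x^0\in\mathbf{R}^N$, for $n=0,1,2,\dots$ let $i=(n\bmod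 N)+1$, $z_i^n=x_i^n-\mu A_i^T(Ax^n-y)$, $x_i^{n+1}=\mathcal{T}(z_i^n,x_i^n)$, $x_j^{n+1}=x_j^n$ for $j\neq i$. *)

theory Defs
  imports "HOL-Analysis.Analysis"
begin

text \<open>Vectors in R^N are functions nat => real, with only indices 0..<N relevant
  (0-based: component j corresponds to the paper's j+1). The m x N matrix A is
  a function nat => nat => real with A i j the (i,j) entry, i < m, j < N.\<close>

definition matvec :: "nat \<Rightarrow> nat \<Rightarrow> (nat \<Rightarrow> nat \<Rightarrow> real) \<Rightarrow> (nat \<Rightarrow> real) \<Rightarrow> nat \<Rightarrow> real" where
  "matvec m N A x = (\<lambda>i. \<Sum>j<N. A i j * x j)"

definition Tlam :: "nat \<Rightarrow> nat \<Rightarrow> (nat \<Rightarrow> nat \<Rightarrow> real) \<Rightarrow> (nat \<Rightarrow> real) \<Rightarrow> real \<Rightarrow> real \<Rightarrow> (nat \<Rightarrow> real) \<Rightarrow> real" where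
  "Tlam m N A y lam q x =
     (1/2) * (\<Sum>i<m. (matvec m N A x i - y i)\<^sup>2) + lam * (\<Sum>j<N. \<bar>x j\<bar> powr q)"

definition colnorm2 :: "nat \<Rightarrow> (nat \<Rightarrow> nat \<Rightarrow> real) \<Rightarrow> nat \<Rightarrow> real" where
  "colnorm2 m A j = (\<Sum>i<m. (A i j)\<^sup>2)"

definition Lmax :: "nat \<Rightarrow> nat \<Rightarrow> (nat \<Rightarrow> nat \<Rightarrow> real) \<Rightarrow> real" where
  "Lmax m N A = Max (colnorm2 m A ` {..<N})"

definition tau :: "real \<Rightarrow> real \<Rightarrow> real \<Rightarrow> real" where
  "tau mu lam q = (2 - q) / (2 - 2*q) * (2*lam*mu*(1 - q)) powr (1 / (2 - q))"

definition eta :: "real \<Rightarrow> real \<Rightarrow> real \<Rightarrow> real" where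
  "eta mu lam q = (2*lam*mu*(1 - q)) powr (1 / (2 - q))"

definition proxset :: "real \<Rightarrow> real \<Rightarrow> real \<Rightarrow> real \<Rightarrow> real set" where
  "proxset mu lam q z = {v. \<forall>u. (z - v)\<^sup>2 / (2*mu) + lam * \<bar>v\<bar> powr q
                               \<le> (z - u)\<^sup>2 / (2*mu) + lam * \<bar>u\<bar> powr q}"

definition Tmap :: "real \<Rightarrow> real \<Rightarrow> real \<Rightarrow> real \<Rightarrow> real \<Rightarrow> real" where
  "Tmap mu lam q z w =
     (if \<bar>z\<bar> \<noteq> tau mu lam q then (THE v. v \<in> proxset mu lam q z)
      else if w \<noteq> 0 then sgn z * eta mu lam q else 0)"

primrec gaita :: "nat \<Rightarrow> nat \<Rightarrow> (nat \<Rightarrow> nat \<Rightarrow> real) \<Rightarrow> (nat \<Rightarrow> real) \<Rightarrow> real \<Rightarrow> real \<Rightarrow> real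
                   \<Rightarrow> (nat \<Rightarrow> real) \<Rightarrow> nat \<Rightarrow> (nat \<Rightarrow> real)" where
  "gaita m N A y lam q mu x0 0 = x0"
| "gaita m N A y lam q mu x0 (Suc n) =
     (let x = gaita m N A y lam q mu x0 n;
          i = n mod N;
          z = x i - mu * (\<Sum>k<m. A k i * (matvec m N A x k - y k))
      in x(i := Tmap mu lam q z (x i)))"

end

theory Submission
  imports Defs
begin


lemma bern_neg:
  fixes x p :: real
  assumes "x > 0" "p \<le> 0"
  shows "1 + p * (x - 1) \<le> x powr p"
proof -
  have "ln x \<le> x - 1" using assms(1) by (rule ln_le_minus_one)
  hence "p * (x - 1) \<le> p * ln x" using assms(2) by (simp add: mult_left_mono_neg)
  also have "1 + p * ln x \<le> exp (p * ln x)" by (rule exp_ge_add_one_self)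
  finally show ?thesis using assms(1) by (simp add: powr_def)
qed

definition hf :: "real \<Rightarrow> real \<Rightarrow> real \<Rightarrow> real \<Rightarrow> real \<Rightarrow> real" where
  "hf mu lam q z v = (z - v)\<^sup>2 / (2*mu) + lam * \<bar>v\<bar> powr q"

lemma proxset_iff: "v \<in> proxset mu lam q z \<longleftrightarrow> (\<forall>u. hf mu lam q z v \<le> hf mu lam q z u)"
  by (simp add: proxset_def hf_def)

lemma prox_exists:
  assumes "mu > 0" "lam > 0" "q > 0"
  shows "\<exists>v. v \<in> proxset mu lam q z"
proof -
  let ?S = "cball (0::real) (2*\<bar>z\<bar>)"
  have c: "continuous_on ?S (hf mu lam q z)"
    unfolding hf_def
    by (intro continuous_intros continuous_on_powr') (use assms in auto)
  obtain v where v: "v \<in> ?S" "\<forall>u\<in>?S. hf mu lam q z v \<le> hf mu lam q z u"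
    using continuous_attains_inf[OF compact_cball _ c] by auto
  have "hf mu lam q z v \<le> hf mu lam q z u" for u
  proof (cases "u \<in> ?S")
    case True thus ?thesis using v by auto
  next
    case False
    hence "\<bar>u\<bar> > 2*\<bar>z\<bar>" by (auto simp: dist_real_def)
    hence "\<bar>z - u\<bar> \<ge> \<bar>z\<bar>" by linarith
    hence "z\<^sup>2 \<le> (z-u)\<^sup>2" by (metis abs_le_square_iff)
    hence "z\<^sup>2 / (2*mu) \<le> (z-u)\<^sup>2 / (2*mu)" using assms by (simp add: divide_right_mono)
    moreover have "0 \<le> lam * \<bar>u\<bar> powr q" using assms by simp
    moreover have "hf mu lam q z 0 = z\<^sup>2 / (2*mu)" using assms by (simp add: hf_def)
    ultimately have "hf mu lam q z 0 \<le> hf mu lam q z u" unfolding hf_def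
      by linarith
    moreover have "hf mu lam q z v \<le> hf mu lam q z 0" using v by auto
    ultimately show ?thesis by linarith
  qed
  thus ?thesis by (auto simp: proxset_iff)
qed

lemma prox_neg: "v \<in> proxset mu lam q z \<Longrightarrow> -v \<in> proxset mu lam q (-z)"
proof -
  assume "v \<in> proxset mu lam q z"
  hence a: "\<forall>u. hf mu lam q z v \<le> hf mu lam q z u" by (simp add: proxset_iff)
  have e: "hf mu lam q (-z) (-u) = hf mu lam q z u" for u
    by (simp add: hf_def power2_commute)
  have "hf mu lam q (-z) (-v) \<le> hf mu lam q (-z) u" for u
    using a[rule_format, of "-u"] e[of v] e[of "-u"] by simp
  thus ?thesis by (simp add: proxset_iff)
qed

lemma prox_nonneg:
  assumes "mu > 0" "z > 0" "v \<in> proxset mu lam q z"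
  shows "v \<ge> 0"
proof (rule ccontr)
  assume "\<not> v \<ge> 0"
  hence "(z - (-v))\<^sup>2 < (z - v)\<^sup>2" using assms by (simp add: power2_eq_square algebra_simps mult_neg_pos)
  hence "hf mu lam q z (-v) < hf mu lam q z v" using assms
    by (simp add: hf_def divide_strict_right_mono)
  thus False using assms by (auto simp: proxset_iff not_le[symmetric])
qed

lemma prox_stat:
  assumes "mu > 0" "v > 0" "v \<in> proxset mu lam q z"
  shows "z = v + lam * mu * q * v powr (q - 1)"
proof -
  let ?f = "\<lambda>u. (z - u)\<^sup>2 / (2*mu) + lam * u powr q"
  have d: "(?f has_real_derivative (- (z - v) / mu + lam * (q * v powr (q - 1)))) (at v)"
    using assms by (auto intro!: derivative_eq_intros simp: field_simps power2_eq_square)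
  have "\<forall>u. \<bar>v - u\<bar> < v \<longrightarrow> ?f v \<le> ?f u"
  proof (intro allI impI)
    fix u assume "\<bar>v - u\<bar> < v"
    hence "u > 0" by linarith
    thus "?f v \<le> ?f u" using assms(2,3) unfolding proxset_iff hf_def
      by (metis abs_of_pos)
  qed
  from DERIV_local_min[OF d assms(2) this]
  have "- (z - v) / mu + lam * (q * v powr (q - 1)) = 0" .
  thus ?thesis using assms(1) by (simp add: field_simps)
qed

lemma powr_qm1: "(v::real) > 0 \<Longrightarrow> v powr (q - 1) = v powr q / v"
  using powr_diff[of v q 1] by simp

lemma stat_calc:
  assumes "mu > 0" "v > 0" "z = v + lam * mu * q * (v powr q / v)"
  shows "hf mu lam q z v - hf mu lam q z 0 = lam * (1 - q) * v powr q - v\<^sup>2 / (2*mu)"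
proof -
  define P where "P = v powr q"
  have zv: "z * v = v\<^sup>2 + lam * mu * q * P" using assms unfolding P_def
    by (simp add: field_simps power2_eq_square)
  have "hf mu lam q z v - hf mu lam q z 0 = ((z - v)\<^sup>2 - z\<^sup>2) / (2*mu) + lam * P"
    using assms by (simp add: hf_def P_def diff_divide_distrib)
  also have "(z - v)\<^sup>2 - z\<^sup>2 = v\<^sup>2 - 2 * (z * v)" by (simp add: power2_eq_square algebra_simps)
  also have "\<dots> = - v\<^sup>2 - 2 * lam * mu * q * P" using zv by simp
  also have "(- v\<^sup>2 - 2 * lam * mu * q * P) / (2*mu) + lam * P = lam * (1 - q) * P - v\<^sup>2 / (2*mu)"
    using assms(1) by (simp add: field_simps)
  finally show ?thesis by (simp add: P_def)
qed

lemma pos_bound: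
  assumes "mu > 0" "v > 0" "v \<in> proxset mu lam q z"
  shows "2 * lam * mu * (1 - q) * v powr q \<le> v\<^sup>2"
proof -
  have st: "z = v + lam * mu * q * (v powr q / v)"
    using prox_stat[OF assms] powr_qm1[OF assms(2)] by simp
  have "hf mu lam q z v \<le> hf mu lam q z 0" using assms(3) by (simp add: proxset_iff)
  hence "lam * (1 - q) * v powr q - v\<^sup>2 / (2*mu) \<le> 0" using stat_calc[OF assms(1,2) st] by simp
  hence "lam * (1 - q) * v powr q \<le> v\<^sup>2 / (2*mu)" by simp
  thus ?thesis using assms(1) by (simp add: field_simps)
qed

lemma uniq_pos:
  assumes "mu > 0" "lam > 0" "0 < q" "q < 1" "0 < a" "a < b"
    and "a \<in> proxset mu lam q z" "b \<in> proxset mu lam q z"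
  shows False
proof -
  have b0: "b > 0" using assms by simp
  define c where "c = lam * mu * q"
  have c0: "c > 0" using assms by (simp add: c_def)
  define al where "al = a powr q / a"
  define be where "be = b powr q / b"
  have al0: "al > 0" using assms by (simp add: al_def)
  have sa: "z = a + c * al" using prox_stat[OF assms(1,5,7)] powr_qm1[OF assms(5)]
    by (simp add: c_def al_def)
  have sb: "z = b + c * be" using prox_stat[OF assms(1) b0 assms(8)] powr_qm1[OF b0]
    by (simp add: c_def be_def)
  have "1 + (q - 1) * (b/a - 1) \<le> (b/a) powr (q - 1)"
    using bern_neg[of "b/a" "q-1"] assms by simp
  also have "(b/a) powr (q - 1) = be / al"
    using assms b0 by (simp add: powr_divide powr_qm1 al_def be_def)
  finally have "al * (1 + (q - 1) * (b/a - 1)) \<le> be" using al0 by (simp add: field_simps)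
  hence "al - al * (1 - q) * (b - a) / a \<le> be" using assms(5) by (simp add: field_simps)
  hence "al - be \<le> al * (1 - q) * (b - a) / a" by linarith
  hence "c * (al - be) \<le> c * (al * (1 - q) * (b - a) / a)" by (rule mult_left_mono) (use c0 in auto)
  moreover have "b - a = c * (al - be)" using sa sb by (simp add: algebra_simps)
  ultimately have "b - a \<le> c * (al * (1 - q) * (b - a) / a)" by simp
  moreover have "c * (al * (1 - q) * (b - a) / a) = (b - a) * (c * al * (1 - q) / a)"
    using assms(5) by (simp add: field_simps)
  ultimately have "(b - a) * 1 \<le> (b - a) * (c * al * (1 - q) / a)" by (metis mult.right_neutral)
  hence h1: "1 \<le> c * al * (1 - q) / a" by (subst (asm) mult_le_cancel_left_pos) (use assms in auto)
  have "2 * lam * mu * (1 - q) * a powr q \<le> a\<^sup>2" using pos_bound[OF assms(1,5,7)] .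
  hence "2 * lam * mu * (1 - q) * (al * a) \<le> a * a" using assms by (simp add: al_def power2_eq_square)
  hence "2 * lam * mu * (1 - q) * al \<le> a" using assms(5)
    by (simp add: mult.commute mult.left_commute)
  hence "q / 2 * (2 * lam * mu * (1 - q) * al) \<le> q / 2 * a"
    by (rule mult_left_mono) (use assms in auto)
  moreover have "c * al * (1 - q) = q / 2 * (2 * lam * mu * (1 - q) * al)" by (simp add: c_def)
  ultimately have "c * al * (1 - q) \<le> q / 2 * a" by linarith
  hence "c * al * (1 - q) / a \<le> q / 2" using assms by (simp add: divide_le_eq)
  with h1 assms(4) show False by linarith
qed

lemma eta_facts:
  assumes "mu > 0" "lam > 0" "0 < q" "q < 1"
  shows "eta mu lam q > 0" "eta mu lam q powr (2 - q) = 2*lam*mu*(1 - q)"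
    "eta mu lam q powr q = (eta mu lam q)\<^sup>2 / (2*lam*mu*(1 - q))"
    "tau mu lam q = (2 - q) / (2 - 2*q) * eta mu lam q"
proof -
  define K where "K = 2*lam*mu*(1 - q)"
  have K0: "K > 0" using assms by (simp add: K_def)
  show e0: "eta mu lam q > 0" using K0 unfolding eta_def K_def[symmetric] by simp
  have "eta mu lam q powr (2 - q) = K powr (1 / (2 - q) * (2 - q))"
    by (simp add: eta_def powr_powr K_def)
  also have "1 / (2 - q) * (2 - q) = 1" using assms by simp
  finally show e1: "eta mu lam q powr (2 - q) = 2*lam*mu*(1 - q)" using K0 by (simp add: K_def)
  have "eta mu lam q powr q * eta mu lam q powr (2 - q) = (eta mu lam q)\<^sup>2"
    using e0 by (simp add: powr_add[symmetric])
  hence "eta mu lam q powr q * K = (eta mu lam q)\<^sup>2" using e1 by (simp add: K_def)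
  thus "eta mu lam q powr q = (eta mu lam q)\<^sup>2 / (2*lam*mu*(1 - q))"
    using K0 unfolding K_def[symmetric] by (simp add: eq_divide_eq)
  show "tau mu lam q = (2 - q) / (2 - 2*q) * eta mu lam q" by (simp add: tau_def eta_def)
qed

lemma zero_pos:
  assumes "mu > 0" "lam > 0" "0 < q" "q < 1" "0 < a"
    and "0 \<in> proxset mu lam q z" "a \<in> proxset mu lam q z"
  shows "z = tau mu lam q"
proof -
  define K where "K = 2*lam*mu*(1 - q)"
  have K0: "K > 0" using assms by (simp add: K_def)
  define P where "P = a powr q"
  have P0: "P > 0" using assms by (simp add: P_def)
  have st: "z = a + lam * mu * q * (P / a)"
    using prox_stat[OF assms(1,5,7)] powr_qm1[OF assms(5)] by (simp add: P_def)
  have "hf mu lam q z a = hf mu lam q z 0" using assms(6,7) unfolding proxset_iff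
    by (meson order_antisym)
  hence "lam * (1 - q) * P - a\<^sup>2 / (2*mu) = 0" using stat_calc[OF assms(1,5) st[unfolded P_def]]
    by (simp add: P_def)
  hence KP: "K * P = a\<^sup>2" using assms(1) by (simp add: K_def field_simps)
  have "a powr (2 - q) = a powr 2 / P" using powr_diff[of a 2 q] by (simp add: P_def)
  also have "\<dots> = K" using KP P0 assms(5) by (simp add: field_simps)
  finally have "a powr (2 - q) = K" .
  hence "K powr (1 / (2 - q)) = a powr ((2 - q) * (1 / (2 - q)))" by (metis powr_powr)
  also have "(2 - q) * (1 / (2 - q)) = 1" using assms by simp
  finally have "K powr (1 / (2 - q)) = a" using assms by simp
  hence E: "eta mu lam q = a" by (simp add: eta_def K_def)
  have "P / a = a / K" using KP P0 assms(5) K0 by (simp add: field_simps power2_eq_square)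
  hence "z = a + lam * mu * q * (a / K)" using st by simp
  also have "\<dots> = (2 - q) / (2 - 2*q) * a" using assms by (simp add: K_def field_simps)
  finally show ?thesis using eta_facts(4)[OF assms(1-4)] E by simp
qed

lemma tau_zero:
  assumes "mu > 0" "lam > 0" "0 < q" "q < 1"
  shows "0 \<in> proxset mu lam q (tau mu lam q)"
proof -
  define K where "K = 2*lam*mu*(1 - q)"
  have K0: "K > 0" using assms by (simp add: K_def)
  define E where "E = eta mu lam q"
  note ef = eta_facts[OF assms, folded E_def K_def]
  define t where "t = tau mu lam q"
  have t0: "t > 0" using ef assms by (simp add: t_def)
  have "hf mu lam q t 0 \<le> hf mu lam q t u" for u
  proof (cases "u \<le> 0")
    case True
    hence "t\<^sup>2 \<le> (t - u)\<^sup>2" using t0 by (simp add: power2_eq_square mult_mono)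
    hence "t\<^sup>2 / (2*mu) \<le> (t - u)\<^sup>2 / (2*mu)" using assms by (simp add: divide_right_mono)
    moreover have "0 \<le> lam * \<bar>u\<bar> powr q" using assms by simp
    ultimately show ?thesis by (simp add: hf_def)
  next
    case False
    hence u0: "u > 0" by simp
    define P where "P = u powr q"
    have "1 + (q - 1) * (u / E - 1) \<le> (u / E) powr (q - 1)"
      using bern_neg[of "u/E" "q-1"] assms u0 ef by simp
    also have "(u / E) powr (q - 1) = (P / u) / (E powr q / E)"
      using u0 ef by (simp add: powr_divide powr_qm1 P_def)
    also have "\<dots> = P * K / (u * E)" using ef K0 u0 by (simp add: field_simps power2_eq_square)
    finally have "(1 + (q - 1) * (u / E - 1)) * (u * E) \<le> P * K"
      using u0 ef by (simp add: le_divide_eq)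
    moreover have "(1 + (q - 1) * (u / E - 1)) * (u * E) = (2 - q) * u * E - (1 - q) * u\<^sup>2"
      using ef by (simp add: field_simps power2_eq_square)
    ultimately have "(2 - q) * u * E - (1 - q) * u\<^sup>2 \<le> K * P" by (simp add: mult.commute)
    hence "(2 - q) * u * E \<le> (1 - q) * (u\<^sup>2 + 2 * mu * lam * P)" by (simp add: K_def algebra_simps)
    moreover have "(2 - q) * u * E = (1 - q) * (2 * t * u)" 
      unfolding t_def ef(4) using assms by (simp add: field_simps)
    ultimately have "(1 - q) * (2 * t * u) \<le> (1 - q) * (u\<^sup>2 + 2 * mu * lam * P)" by simp
    hence "2 * t * u \<le> u\<^sup>2 + 2 * mu * lam * P" using assms by simp
    hence "t\<^sup>2 \<le> (t - u)\<^sup>2 + 2 * mu * lam * P" by (simp add: power2_eq_square algebra_simps)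
    hence "t\<^sup>2 / (2*mu) \<le> (t - u)\<^sup>2 / (2*mu) + lam * P" using assms
      by (simp add: field_simps)
    thus ?thesis using u0 by (simp add: hf_def P_def)
  qed
  thus ?thesis by (simp add: proxset_iff t_def)
qed

lemma tau_eta:
  assumes "mu > 0" "lam > 0" "0 < q" "q < 1"
  shows "eta mu lam q \<in> proxset mu lam q (tau mu lam q)"
proof -
  define K where "K = 2*lam*mu*(1 - q)"
  have K0: "K > 0" using assms by (simp add: K_def)
  define E where "E = eta mu lam q"
  note ef = eta_facts[OF assms, folded E_def K_def]
  define t where "t = tau mu lam q"
  define s where "s = (2 - q) / (2 - 2*q)"
  have ts: "t = s * E" using ef by (simp add: t_def s_def)
  have "2 * mu * lam / K = 2 * s - 1" using assms by (simp add: K_def s_def field_simps)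
  hence "(s - 1)\<^sup>2 + 2 * mu * lam / K = s\<^sup>2" by (simp add: power2_eq_square algebra_simps)
  hence "((s - 1)\<^sup>2 + 2 * mu * lam / K) * E\<^sup>2 / (2*mu) = s\<^sup>2 * E\<^sup>2 / (2*mu)" by simp
  hence eq: "(s * E - E)\<^sup>2 / (2*mu) + lam * (E\<^sup>2 / K) = (s * E)\<^sup>2 / (2*mu)"
    using assms K0 by (simp add: field_simps power2_eq_square)
  have "hf mu lam q t E = (t - E)\<^sup>2 / (2*mu) + lam * (E\<^sup>2 / K)" using ef by (simp add: hf_def)
  also have "\<dots> = hf mu lam q t 0" using eq ts by (simp add: hf_def)
  finally have "hf mu lam q t E = hf mu lam q t 0" .
  with tau_zero[OF assms] show ?thesis by (simp add: proxset_iff t_def E_def)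
qed

lemma prox_unique_nonneg:
  assumes "mu > 0" "lam > 0" "0 < q" "q < 1" "z \<ge> 0" "z \<noteq> tau mu lam q"
    and "a \<in> proxset mu lam q z" "b \<in> proxset mu lam q z"
  shows "a = b"
proof (cases "z = 0")
  case True
  have "v = 0" if "v \<in> proxset mu lam q z" for v
  proof -
    have "hf mu lam q z v \<le> hf mu lam q z 0" using that by (simp add: proxset_iff)
    hence "v\<^sup>2 / (2*mu) + lam * \<bar>v\<bar> powr q \<le> 0" using True assms by (simp add: hf_def)
    moreover have "0 \<le> lam * \<bar>v\<bar> powr q" using assms by simp
    ultimately have "v\<^sup>2 / (2*mu) \<le> 0" by linarith
    hence "v\<^sup>2 \<le> 0" using assms by (simp add: divide_le_0_iff)
    thus "v = 0" by simp
  qed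
  thus ?thesis using assms by metis
next
  case False
  hence z0: "z > 0" using assms by simp
  have a0: "a \<ge> 0" and b0: "b \<ge> 0" using prox_nonneg[OF assms(1) z0] assms(7,8) by auto
  have key: "False" if "0 \<le> c" "c < d" "c \<in> proxset mu lam q z" "d \<in> proxset mu lam q z" for c d
  proof (cases "c = 0")
    case True
    thus False using zero_pos[OF assms(1-4), of d z] that assms(6) by simp
  next
    case False
    thus False using uniq_pos[OF assms(1-4), of c d z] that by simp
  qed
  show ?thesis
  proof (rule ccontr)
    assume "a \<noteq> b"
    hence "a < b \<or> b < a" by linarith
    thus False using key a0 b0 assms(7,8) by blast
  qed
qed

lemma Tmap_in:
  assumes "mu > 0" "lam > 0" "0 < q" "q < 1"
  shows "Tmap mu lam q z w \<in> proxset mu lam q z"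
proof (cases "\<bar>z\<bar> = tau mu lam q")
  case False
  have ex: "\<exists>v. v \<in> proxset mu lam q z" using prox_exists assms by simp
  have un: "a = b" if "a \<in> proxset mu lam q z" "b \<in> proxset mu lam q z" for a b
  proof (cases "z \<ge> 0")
    case True
    thus ?thesis using prox_unique_nonneg[OF assms True _ that] False by simp
  next
    case nz: False
    have "-a = -b" using prox_unique_nonneg[OF assms, of "-z" "-a" "-b"] prox_neg[OF that(1)]
      prox_neg[OF that(2)] nz False by simp
    thus ?thesis by simp
  qed
  have "(THE v. v \<in> proxset mu lam q z) \<in> proxset mu lam q z"
    by (rule theI') (use ex un in blast)
  thus ?thesis using False by (simp add: Tmap_def)
next
  case True
  have t0: "tau mu lam q > 0" using eta_facts[OF assms] assms by simp
  have "z = tau mu lam q \<or> z = - tau mu lam q" using True by linarith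
  thus ?thesis
  proof
    assume z: "z = tau mu lam q"
    thus ?thesis using True t0 tau_zero[OF assms] tau_eta[OF assms]
      by (auto simp: Tmap_def)
  next
    assume z: "z = - tau mu lam q"
    have "- eta mu lam q \<in> proxset mu lam q z" using prox_neg[OF tau_eta[OF assms]] z by simp
    moreover have "0 \<in> proxset mu lam q z" using prox_neg[OF tau_zero[OF assms]] z by simp
    ultimately show ?thesis using True t0 z by (auto simp: Tmap_def)
  qed
qed



lemma descent:
  fixes m N :: nat and A :: "nat \<Rightarrow> nat \<Rightarrow> real" and y xv :: "nat \<Rightarrow> real"
    and lam q mu v :: real and i :: nat
  assumes "mu > 0" "i < N" "colnorm2 m A i \<le> L"
    and "v \<in> proxset mu lam q (xv i - mu * (\<Sum>k<m. A k i * (matvec m N A xv k - y k)))"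
  shows "Tlam m N A y lam q (xv(i := v)) + (1 - mu * L) / (2*mu) * (\<Sum>j<N. ((xv(i := v)) j - xv j)\<^sup>2)
         \<le> Tlam m N A y lam q xv"
proof -
  define d where "d = v - xv i"
  define r where "r = (\<lambda>k. matvec m N A xv k - y k)"
  define g where "g = (\<Sum>k<m. A k i * r k)"
  define C where "C = colnorm2 m A i"
  define R where "R = (\<Sum>k<m. (r k)\<^sup>2)"
  define S where "S = (\<Sum>j<N. \<bar>xv j\<bar> powr q)"
  let ?x = "xv(i := v)"
  have xs: "?x j = xv j + (if j = i then d else 0)" for j by (simp add: d_def)
  have mv: "matvec m N A ?x k = matvec m N A xv k + A k i * d" for k
  proof -
    have "matvec m N A ?x k = (\<Sum>j<N. A k j * xv j + (if j = i then A k j * d else 0))"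
      unfolding matvec_def xs by (simp add: algebra_simps if_distrib cong: if_cong)
    also have "\<dots> = matvec m N A xv k + A k i * d"
      using assms(2) by (simp add: sum.distrib matvec_def sum.delta)
    finally show ?thesis .
  qed
  have "(\<Sum>k<m. (matvec m N A ?x k - y k)\<^sup>2) = (\<Sum>k<m. (r k)\<^sup>2 + 2 * d * (A k i * r k) + d\<^sup>2 * (A k i)\<^sup>2)"
    by (rule sum.cong) (auto simp: mv r_def power2_eq_square algebra_simps)
  also have "\<dots> = R + 2 * d * g + d\<^sup>2 * C"
    by (simp add: sum.distrib sum_distrib_left R_def g_def C_def colnorm2_def)
  finally have e1: "(\<Sum>k<m. (matvec m N A ?x k - y k)\<^sup>2) = R + 2 * d * g + d\<^sup>2 * C" .
  have fin: "finite {..<N}" by simp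
  have iN: "i \<in> {..<N}" using assms(2) by simp
  have "(\<Sum>j<N. \<bar>?x j\<bar> powr q) = \<bar>?x i\<bar> powr q + (\<Sum>j\<in>{..<N}-{i}. \<bar>?x j\<bar> powr q)"
    by (rule sum.remove[OF fin iN])
  also have "\<bar>?x i\<bar> powr q = \<bar>v\<bar> powr q" by simp
  also have "(\<Sum>j\<in>{..<N}-{i}. \<bar>?x j\<bar> powr q) = (\<Sum>j\<in>{..<N}-{i}. \<bar>xv j\<bar> powr q)"
    by (rule sum.cong) auto
  also have "\<dots> = S - \<bar>xv i\<bar> powr q" using sum.remove[OF fin iN, of "\<lambda>j. \<bar>xv j\<bar> powr q"]
    by (simp add: S_def)
  finally have e2: "(\<Sum>j<N. \<bar>?x j\<bar> powr q) = \<bar>v\<bar> powr q + (S - \<bar>xv i\<bar> powr q)" .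
  have "(\<Sum>j<N. (?x j - xv j)\<^sup>2) = (\<Sum>j<N. if j = i then d\<^sup>2 else 0)"
    by (rule sum.cong) (auto simp: d_def)
  hence e3: "(\<Sum>j<N. (?x j - xv j)\<^sup>2) = d\<^sup>2" using assms(2) by simp
  have T0: "Tlam m N A y lam q xv = R / 2 + lam * S"
    by (simp add: Tlam_def R_def S_def r_def)
  have T1: "Tlam m N A y lam q ?x = (R + 2 * d * g + d\<^sup>2 * C) / 2 + lam * (\<bar>v\<bar> powr q + (S - \<bar>xv i\<bar> powr q))"
    unfolding Tlam_def e1 e2 by simp
  have "hf mu lam q (xv i - mu * g) v \<le> hf mu lam q (xv i - mu * g) (xv i)"
    using assms(4) by (simp add: proxset_iff g_def r_def)
  hence "(mu * g + d)\<^sup>2 / (2*mu) + lam * \<bar>v\<bar> powr q \<le> (mu * g)\<^sup>2 / (2*mu) + lam * \<bar>xv i\<bar> powr q"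
    by (simp add: hf_def d_def power2_commute algebra_simps)
  moreover have "(mu * g + d)\<^sup>2 / (2*mu) = (mu * g)\<^sup>2 / (2*mu) + d * g + d\<^sup>2 / (2*mu)"
    using assms(1) by (simp add: field_simps power2_eq_square)
  ultimately have pr: "d * g + d\<^sup>2 / (2*mu) + lam * \<bar>v\<bar> powr q \<le> lam * \<bar>xv i\<bar> powr q" by simp
  have CL: "d\<^sup>2 * C \<le> d\<^sup>2 * L" using assms(3) by (simp add: C_def mult_left_mono)
  have "(1 - mu * L) / (2*mu) * d\<^sup>2 = d\<^sup>2 / (2*mu) - d\<^sup>2 * L / 2" using assms(1)
    by (simp add: field_simps)
  moreover have "lam * (\<bar>v\<bar> powr q + (S - \<bar>xv i\<bar> powr q)) = lam * \<bar>v\<bar> powr q + lam * S - lam * \<bar>xv i\<bar> powr q"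
    by (simp add: algebra_simps)
  moreover have "(R + 2 * d * g + d\<^sup>2 * C) / 2 = R / 2 + d * g + d\<^sup>2 * C / 2" by simp
  ultimately show ?thesis unfolding e3 T0 T1 using pr CL by linarith
qed

lemma Tlam_nonneg: "lam > 0 \<Longrightarrow> Tlam m N A y lam q x \<ge> 0"
  unfolding Tlam_def by (intro add_nonneg_nonneg mult_nonneg_nonneg sum_nonneg) auto

theorem mainTheorem9:
  fixes m N :: nat and A :: "nat \<Rightarrow> nat \<Rightarrow> real" and y x0 :: "nat \<Rightarrow> real"
    and lam q mu :: real
  assumes "N \<ge> 1"
    and "lam > 0" and "0 < q" and "q < 1"
    and "0 < mu" and "mu * Lmax m N A < 1"
  defines "x \<equiv> gaita m N A y lam q mu x0"
  shows "(\<exists>B. \<forall>n. \<forall>j<N. \<bar>x n j\<bar> \<le> B)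
    \<and> (\<forall>n. (\<Sum>k\<le>n. \<Sum>j<N. (x (Suc k) j - x k j)\<^sup>2)
            \<le> 2 * mu / (1 - mu * Lmax m N A) * Tlam m N A y lam q x0)
    \<and> (\<lambda>n. sqrt (\<Sum>j<N. (x n j - x (Suc n) j)\<^sup>2)) \<longlonglongrightarrow> 0"
proof -
  define L where "L = Lmax m N A"
  define c where "c = (1 - mu * L) / (2*mu)"
  define T where "T = (\<lambda>n. Tlam m N A y lam q (x n))"
  define D where "D = (\<lambda>k. \<Sum>j<N. (x (Suc k) j - x k j)\<^sup>2)"
  have c0: "c > 0" using assms by (simp add: c_def L_def)
  have T0: "T n \<ge> 0" for n using Tlam_nonneg[OF assms(2)] by (simp add: T_def)
  have D0: "D n \<ge> 0" for n by (simp add: D_def sum_nonneg)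
  have step: "T (Suc n) + c * D n \<le> T n" for n
  proof -
    define i where "i = n mod N"
    have iN: "i < N" using assms(1) by (simp add: i_def)
    have CL: "colnorm2 m A i \<le> L" unfolding L_def Lmax_def
      using iN by (intro Max_ge) auto
    define z where "z = x n i - mu * (\<Sum>k<m. A k i * (matvec m N A (x n) k - y k))"
    have xs: "x (Suc n) = (x n)(i := Tmap mu lam q z (x n i))"
      by (simp add: x_def i_def z_def Let_def)
    have "Tmap mu lam q z (x n i) \<in> proxset mu lam q z" using Tmap_in assms by simp
    from descent[OF assms(5) iN CL this[unfolded z_def]]
    show ?thesis unfolding T_def D_def c_def xs z_def .
  qed
  have tele: "c * (\<Sum>k\<le>n. D k) \<le> T 0 - T (Suc n)" for n
  proof (induction n)
    case 0 thus ?case using step[of 0] by simp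
  next
    case (Suc n) thus ?case using step[of "Suc n"] by (simp add: distrib_left)
  qed
  have Tx0: "T 0 = Tlam m N A y lam q x0" by (simp add: T_def x_def)
  have sumb: "(\<Sum>k\<le>n. D k) \<le> T 0 / c" for n
    using tele[of n] T0[of "Suc n"] c0 by (simp add: le_divide_eq mult.commute)
  have part2: "\<forall>n. (\<Sum>k\<le>n. \<Sum>j<N. (x (Suc k) j - x k j)\<^sup>2)
            \<le> 2 * mu / (1 - mu * Lmax m N A) * Tlam m N A y lam q x0"
  proof
    fix n
    have "T 0 / c = 2 * mu / (1 - mu * L) * T 0" by (simp add: c_def)
    thus "(\<Sum>k\<le>n. \<Sum>j<N. (x (Suc k) j - x k j)\<^sup>2)
            \<le> 2 * mu / (1 - mu * Lmax m N A) * Tlam m N A y lam q x0"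
      using sumb[of n] by (simp add: D_def L_def Tx0)
  qed
  have mono: "T n \<le> T 0" for n
  proof (induction n)
    case (Suc n) thus ?case using step[of n] c0 D0[of n]
      using mult_nonneg_nonneg[of c "D n"] by linarith
  qed simp
  define B where "B = (T 0 / lam) powr (1 / q)"
  have part1: "\<forall>n. \<forall>j<N. \<bar>x n j\<bar> \<le> B"
  proof (intro allI impI)
    fix n j assume j: "j < N"
    have "\<bar>x n j\<bar> powr q \<le> (\<Sum>j<N. \<bar>x n j\<bar> powr q)"
      using j by (intro member_le_sum) auto
    hence "lam * \<bar>x n j\<bar> powr q \<le> lam * (\<Sum>j<N. \<bar>x n j\<bar> powr q)"
      using assms(2) by simp
    also have "\<dots> \<le> T n" unfolding T_def Tlam_def by (simp add: sum_nonneg)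
    also have "\<dots> \<le> T 0" by (rule mono)
    finally have "\<bar>x n j\<bar> powr q \<le> T 0 / lam" using assms(2) by (simp add: le_divide_eq mult.commute)
    hence "(\<bar>x n j\<bar> powr q) powr (1 / q) \<le> (T 0 / lam) powr (1 / q)"
      using assms by (intro powr_mono2) auto
    moreover have "(\<bar>x n j\<bar> powr q) powr (1 / q) = \<bar>x n j\<bar>"
      using assms by (simp add: powr_powr)
    ultimately show "\<bar>x n j\<bar> \<le> B" by (simp add: B_def)
  qed
  have summ: "summable D"
  proof (rule summableI_nonneg_bounded[where x = "T 0 / c"])
    show "0 \<le> D n" for n by (rule D0)
    show "sum D {..<n} \<le> T 0 / c" for n
    proof (cases n)
      case 0 thus ?thesis using T0[of 0] c0 by simp
    next
      case (Suc k) thus ?thesis using sumb[of k] by (simp add: lessThan_Suc_atMost)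
    qed
  qed
  have "D \<longlonglongrightarrow> 0" by (rule summable_LIMSEQ_zero[OF summ])
  hence "(\<lambda>n. sqrt (D n)) \<longlonglongrightarrow> sqrt 0" by (rule tendsto_real_sqrt)
  moreover have "D n = (\<Sum>j<N. (x n j - x (Suc n) j)\<^sup>2)" for n
    by (simp add: D_def power2_commute)
  ultimately have part3: "(\<lambda>n. sqrt (\<Sum>j<N. (x n j - x (Suc n) j)\<^sup>2)) \<longlonglongrightarrow> 0" by simp
  show ?thesis using part1 part2 part3 by blast
qed


end
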